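(* Let $\kappa$ be a gravitational lens satisfying the conditions in the context, and let $\alpha(x)=\frac{2}{x}\int_0^x\kappa(t)\,t\,dt$ for $x>0$ be its normalized deflection angle. An Einstein ring is a radius $x_E>0$ with $\alpha(x_E)=x_E$. If an Einstein ring exists, then there is exactly one.
   Context: A gravitational lens (in a single lens plane) is given by a normalized surface density $\kappa$ on the plane $\mathbb{R}^2$ satisfying: (i) Continuity: $\kappa:\mathbb{R}^2\to[0,\infty)$ is continuous, except possibly at the origin for singular lenses. (ii) Circular symmetry: $\kappa$ depends only on the radius $x=\|\mathbf{x}\|$; write $\kappa=\kappa(x)$. (iii) Finiteness: $\kappa(x)<\infty$ for $x>0$; $\kappa(0)=1/C_1$ for a constant $C_1\ge 0$ (so $\kappa(0)=+\infty$ when $C_1=0$); and $\lim_{x\to\infty}\kappa(x)\,x=C_2$ for a constant $0\le C_2<\infty$. (iv) Self-gravitation: $\kappa(x)<\bar\kappa(x)$ for $x>0$, where $\bar\kappa(x)=\frac{2}{x^2}\int_0^x\kappa(t)\,t\,dt$. The lens is called singular if and only if $C_1=0$, and non-singular otherwise. The deflection angle $\alpha$ is the radial derivative of the lensing potential $f$ solving $\Delta f=2\kappa$, which for a circularly symmetric lens is $\alpha(x)=\frac{2}{x}\int_0^x\kappa(t)\,t\,dt$. *)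

theory Defs
  imports "HOL-Analysis.Analysis"
begin

text \<open>A circularly symmetric lens is represented by its radial profile
  kappa :: real => real, of which only the values on [0, infinity) matter.\<close>

definition mean_kappa :: "(real \<Rightarrow> real) \<Rightarrow> real \<Rightarrow> real" where
  "mean_kappa \<kappa> x = 2 / x^2 * integral {0..x} (\<lambda>t. \<kappa> t * t)"

definition deflection :: "(real \<Rightarrow> real) \<Rightarrow> real \<Rightarrow> real" where
  "deflection \<kappa> x = 2 / x * integral {0..x} (\<lambda>t. \<kappa> t * t)"

text \<open>For a singular lens (C1 = 0), kappa(0) = +infinity is
  read as kappa(x) tending to +infinity as x tends to 0 from the right.
  Integrability of kappa(t) t on [0,x] is assumed so that mean_kappa and the
  deflection angle are defined.\<close>

definition grav_lens :: "(real \<Rightarrow> real) \<Rightarrow> real \<Rightarrow> real \<Rightarrow> bool" where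
  "grav_lens \<kappa> C1 C2 \<longleftrightarrow>
     (\<forall>x\<ge>0. 0 \<le> \<kappa> x) \<and>
     continuous_on {0<..} \<kappa> \<and>
     (\<forall>x>0. (\<lambda>t. \<kappa> t * t) integrable_on {0..x}) \<and>
     0 \<le> C1 \<and>
     (0 < C1 \<longrightarrow> \<kappa> 0 = 1 / C1 \<and> continuous (at_right 0) \<kappa>) \<and>
     (C1 = 0 \<longrightarrow> filterlim \<kappa> at_top (at_right 0)) \<and>
     0 \<le> C2 \<and> ((\<lambda>x. \<kappa> x * x) \<longlongrightarrow> C2) at_top \<and>
     (\<forall>x>0. \<kappa> x < mean_kappa \<kappa> x)"

end

theory Submission
  imports Defs
begin

lemma eq_lemma: fixes x F d :: real assumes x: "x>0" and D: "d = 2 * F / x"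
  shows "d = x \<longleftrightarrow> 2 * F / x^2 = 1"
proof
  assume h: "d = x"
  have "x = 2 * F / x" using h D by simp
  then have "x * x = 2 * F" using x by (simp add: eq_divide_eq)
  then have "2 * F = x^2" by (simp add: power2_eq_square)
  then show "2 * F / x^2 = 1" using x by simp
next
  assume "2 * F / x^2 = 1"
  then have "2 * F = x * x" using x by (simp add: power2_eq_square divide_eq_eq)
  then show "d = x" using x D by simp
qed

lemma F_deriv:
  fixes f :: "real \<Rightarrow> real"
  assumes cont: "continuous_on {0<..} f"
    and int: "\<forall>x>0. f integrable_on {0..x}"
    and x: "x > 0"
  shows "((\<lambda>y. integral {0..y} f) has_real_derivative f x) (at x)"
proof -
  define a where "a = x/2"
  define b where "b = 2*x"
  have ab: "0 < a" "a < x" "x < b" using x by (auto simp: a_def b_def)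
  have ci: "continuous_on {a..b} f"
    by (rule continuous_on_subset[OF cont]) (use ab in auto)
  have d1: "((\<lambda>y. integral {a..y} f) has_real_derivative f x) (at x within {a..b})"
    by (rule integral_has_real_derivative[OF ci]) (use ab in auto)
  have i: "x \<in> interior {a..b}" using ab by simp
  have d2: "((\<lambda>y. integral {a..y} f) has_real_derivative f x) (at x)"
    using d1 unfolding at_within_interior[OF i] .
  have d3: "((\<lambda>y. integral {0..a} f + integral {a..y} f) has_real_derivative f x) (at x)"
    using d2 by (auto intro!: derivative_eq_intros)
  show ?thesis
  proof (rule has_field_derivative_transform_within_open[OF d3, of "{a<..<b}"])
    show "open {a<..<b}" by simp
    show "x \<in> {a<..<b}" using ab by auto
    fix y assume y: "y \<in> {a<..<b}"
    have "f integrable_on {0..y}" using int y ab by auto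
    then show "integral {0..a} f + integral {a..y} f = integral {0..y} f"
      using Henstock_Kurzweil_Integration.integral_combine[where a=0 and c=a and b=y and f=f] y ab by auto
  qed
qed

theorem theorem2:
  fixes \<kappa> :: "real \<Rightarrow> real" and C1 C2 :: real
  assumes "grav_lens \<kappa> C1 C2"
    and "\<exists>xE>0. deflection \<kappa> xE = xE"
  shows "\<exists>!xE. 0 < xE \<and> deflection \<kappa> xE = xE"
proof -
  define f where "f = (\<lambda>t. \<kappa> t * t)"
  define F where "F = (\<lambda>y. integral {0..y} f)"
  have contk: "continuous_on {0<..} \<kappa>" and int: "\<forall>x>0. f integrable_on {0..x}"
    and less: "\<forall>x>0. \<kappa> x < mean_kappa \<kappa> x"
    using assms(1) unfolding grav_lens_def f_def by auto
  have contf: "continuous_on {0<..} f" unfolding f_def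
    by (intro continuous_intros contk)
  have dF: "\<And>x. x > 0 \<Longrightarrow> (F has_real_derivative f x) (at x)"
    unfolding F_def by (rule F_deriv[OF contf int])
  define g where "g = (\<lambda>y. 2 * F y / y^2)"
  have mk: "\<And>x. mean_kappa \<kappa> x = g x"
    unfolding mean_kappa_def g_def F_def f_def by simp
  have dg: "\<And>x. x > 0 \<Longrightarrow> \<exists>d. DERIV g x :> d \<and> d < 0"
  proof -
    fix x :: real assume x: "x > 0"
    have D: "DERIV g x :> (2 * f x * x^2 - 2 * F x * (2 * x)) / (x^2)^2"
      unfolding g_def using x
      by (auto intro!: derivative_eq_intros dF simp: power2_eq_square)
    have "\<kappa> x < 2 * F x / x^2" using less x mk g_def by auto
    then have "\<kappa> x * x^2 < 2 * F x" using x by (simp add: field_simps)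
    then have neg: "\<kappa> x * x^2 - 2 * F x < 0" by simp
    have e: "2 * f x * x^2 - 2 * F x * (2 * x) = (2 * x) * (\<kappa> x * x^2 - 2 * F x)"
      unfolding f_def by (simp add: algebra_simps power2_eq_square)
    have "(2 * x) * (\<kappa> x * x^2 - 2 * F x) < 0"
      using x neg by (simp add: mult_pos_neg)
    then have "2 * f x * x^2 - 2 * F x * (2 * x) < 0" using e by simp
    then have "(2 * f x * x^2 - 2 * F x * (2 * x)) / (x^2)^2 < 0"
      using x by (simp add: divide_neg_pos)
    with D show "\<exists>d. DERIV g x :> d \<and> d < 0" by blast
  qed
  have mono: "\<And>a b. 0 < a \<Longrightarrow> a < b \<Longrightarrow> g b < g a"
  proof -
    fix a b :: real assume ab: "0 < a" "a < b"
    show "g b < g a"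
    proof (rule DERIV_neg_imp_decreasing[OF ab(2)])
      fix x assume "a \<le> x" "x \<le> b"
      then show "\<exists>y. DERIV g x :> y \<and> y < 0" using dg ab by auto
    qed
  qed
  have eq: "\<And>x. x > 0 \<Longrightarrow> deflection \<kappa> x = x \<longleftrightarrow> g x = 1"
  proof -
    fix x :: real assume x: "x > 0"
    have "deflection \<kappa> x = 2 * F x / x" unfolding deflection_def F_def f_def by simp
    then show "deflection \<kappa> x = x \<longleftrightarrow> g x = 1"
      unfolding g_def using eq_lemma[OF x] by blast
  qed
  show ?thesis
  proof (rule ex_ex1I)
    show "\<exists>xE. 0 < xE \<and> deflection \<kappa> xE = xE" using assms(2) by blast
  next
    fix x y assume x: "0 < x \<and> deflection \<kappa> x = x" and y: "0 < y \<and> deflection \<kappa> y = y"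
    have "g x = 1" using eq[of x] x by blast
    have "g y = 1" using eq[of y] y by blast
    show "x = y"
    proof (rule linorder_cases[of x y])
      assume "x < y" then have "g y < g x" using mono[of x y] x by simp
      then show ?thesis using \<open>g x = 1\<close> \<open>g y = 1\<close> by simp
    next
      assume "y < x" then have "g x < g y" using mono[of y x] y by simp
      then show ?thesis using \<open>g x = 1\<close> \<open>g y = 1\<close> by simp
    qed
  qed
qed

end
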